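(* Let $r,n\geq1$, let $Z_n=\mathbb{C}^{2n}/((\mathbb{Z}/r\mathbb{Z})\wr S_n)$, let $R_n=\mathbb{C}[x_1,\dots,x_n,y_1,\dots,y_n,z_1,\dots,z_n]$ with $S_n$ acting by simultaneously permuting the indices of the $x_i,y_i,z_i$, and let $I_n=(x_1y_1-z_1^r,\dots,x_ny_n-z_n^r)\subset R_n$. Then \[\mathbb{C}[Z_n]\simeq R_n^{S_n}/I_n^{S_n},\] where $I_n^{S_n}=I_n\cap R_n^{S_n}$; more precisely, the natural map $R_n^{S_n}/I_n^{S_n}\to (R_n/I_n)^{S_n}\simeq \mathbb{C}[Z_n]$ is an isomorphism.
   Context: $(\mathbb{Z}/r\mathbb{Z})\wr S_n$ acts on $\mathbb{C}^{2n}$ with coordinates $(X_i,Y_i)_{i=1}^n$: the $i$-th copy of $\mathbb{Z}/r\mathbb{Z}$ acts by $(X_i,Y_i)\mapsto(\zeta X_i,\zeta^{-1}Y_i)$ ($\zeta^r=1$), and $S_n$ permutes the pairs. The identification $\mathbb{C}[Z_n]=\mathbb{C}[X,Y]^{(\mathbb{Z}/r\mathbb{Z})\wr S_n}\simeq (R_n/I_n)^{S_n}$ is given by $x_i\mapsto X_i^r$, $y_i\mapsto Y_i^r$, $z_i\mapsto X_iY_i$. *)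

theory Defs
  imports "HOL-Library.Poly_Mapping" "HOL-Combinatorics.Permutations" Complex_Main
begin

type_synonym 'v mpoly = "('v \<Rightarrow>\<^sub>0 nat) \<Rightarrow>\<^sub>0 complex"

definition mvar :: "'v \<Rightarrow> 'v mpoly" where
  "mvar v = Poly_Mapping.single (Poly_Mapping.single v 1) 1"

definition mconst :: "complex \<Rightarrow> 'v mpoly" where
  "mconst c = Poly_Mapping.single 0 c"

definition vars :: "'v mpoly \<Rightarrow> 'v set" where
  "vars p = (\<Union>m \<in> Poly_Mapping.keys p. Poly_Mapping.keys m)"

definition subst :: "('v \<Rightarrow> 'w mpoly) \<Rightarrow> 'v mpoly \<Rightarrow> 'w mpoly" where
  "subst s p = (\<Sum>m \<in> Poly_Mapping.keys p.
      mconst (Poly_Mapping.lookup p m) *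
      (\<Prod>v \<in> Poly_Mapping.keys m. s v ^ Poly_Mapping.lookup m v))"

text \<open>Variables of R_n: x_i, y_i, z_i (indices 0..n-1).\<close>
datatype rvar = Xv nat | Yv nat | Zv nat

fun ridx :: "rvar \<Rightarrow> nat" where
  "ridx (Xv i) = i" | "ridx (Yv i) = i" | "ridx (Zv i) = i"

fun rrename :: "(nat \<Rightarrow> nat) \<Rightarrow> rvar \<Rightarrow> rvar" where
  "rrename \<sigma> (Xv i) = Xv (\<sigma> i)" | "rrename \<sigma> (Yv i) = Yv (\<sigma> i)" | "rrename \<sigma> (Zv i) = Zv (\<sigma> i)"

definition Rn :: "nat \<Rightarrow> rvar mpoly set" where
  "Rn n = {p. \<forall>v \<in> vars p. ridx v < n}"

definition permR :: "(nat \<Rightarrow> nat) \<Rightarrow> rvar mpoly \<Rightarrow> rvar mpoly" where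
  "permR \<sigma> p = subst (\<lambda>v. mvar (rrename \<sigma> v)) p"

definition RnS :: "nat \<Rightarrow> rvar mpoly set" where
  "RnS n = {p \<in> Rn n. \<forall>\<sigma>. \<sigma> permutes {..<n} \<longrightarrow> permR \<sigma> p = p}"

definition In :: "nat \<Rightarrow> nat \<Rightarrow> rvar mpoly set" where
  "In r n = {p. \<exists>a. (\<forall>i<n. a i \<in> Rn n) \<and>
      p = (\<Sum>i<n. a i * (mvar (Xv i) * mvar (Yv i) - mvar (Zv i) ^ r))}"

datatype cvar = CX nat | CY nat

fun cidx :: "cvar \<Rightarrow> nat" where
  "cidx (CX i) = i" | "cidx (CY i) = i"

definition Cn :: "nat \<Rightarrow> cvar mpoly set" where
  "Cn n = {q. \<forall>v \<in> vars q. cidx v < n}"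

text \<open>Action of the element ((zeta_i)_i, sigma) of (Z/rZ) wr S_n (zeta_i r-th roots of unity):
  (X_i, Y_i) goes to (zeta_i X_{sigma i}, zeta_i^{-1} Y_{sigma i}).\<close>
definition gact :: "(nat \<Rightarrow> complex) \<Rightarrow> (nat \<Rightarrow> nat) \<Rightarrow> cvar mpoly \<Rightarrow> cvar mpoly" where
  "gact \<zeta> \<sigma> q = subst (\<lambda>v. case v of
       CX i \<Rightarrow> mconst (\<zeta> i) * mvar (CX (\<sigma> i))
     | CY i \<Rightarrow> mconst (inverse (\<zeta> i)) * mvar (CY (\<sigma> i))) q"

text \<open>C[Z_n] = C[X,Y]^{(Z/rZ) wr S_n}.\<close>
definition CZ :: "nat \<Rightarrow> nat \<Rightarrow> cvar mpoly set" where
  "CZ r n = {q \<in> Cn n. \<forall>\<zeta> \<sigma>. \<sigma> permutes {..<n} \<and> (\<forall>i<n. \<zeta> i ^ r = 1)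
      \<longrightarrow> gact \<zeta> \<sigma> q = q}"

definition phi :: "nat \<Rightarrow> rvar mpoly \<Rightarrow> cvar mpoly" where
  "phi r p = subst (\<lambda>v. case v of
       Xv i \<Rightarrow> mvar (CX i) ^ r
     | Yv i \<Rightarrow> mvar (CY i) ^ r
     | Zv i \<Rightarrow> mvar (CX i) * mvar (CY i)) p"

end

theory Submission
  imports Defs
begin


lemma mconst_add: "mconst (a + b) = (mconst a + mconst b :: 'v mpoly)"
  by (simp add: mconst_def single_add)
lemma mconst_mult: "mconst (a * b) = (mconst a * mconst b :: 'v mpoly)"
  by (simp add: mconst_def mult_single)
lemma mconst_0[simp]: "mconst 0 = (0 :: 'v mpoly)"
  by (simp add: mconst_def)
lemma mconst_1[simp]: "mconst 1 = (1 :: 'v mpoly)"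
  by (simp add: mconst_def)
lemma mconst_uminus: "mconst (- a) = (- mconst a :: 'v mpoly)"
  by (simp add: mconst_def single_uminus)
lemma mconst_diff: "mconst (a - b) = (mconst a - mconst b :: 'v mpoly)"
  by (simp add: mconst_def single_diff)
lemma mconst_power: "mconst (a ^ k) = (mconst a ^ k :: 'v mpoly)"
  by (induction k) (simp_all add: mconst_mult)
lemma mconst_single: "mconst c * Poly_Mapping.single m d = Poly_Mapping.single m (c * d)"
  by (simp add: mconst_def mult_single)

definition mon :: "('v \<Rightarrow> 'w mpoly) \<Rightarrow> ('v \<Rightarrow>\<^sub>0 nat) \<Rightarrow> 'w mpoly" where
  "mon s m = (\<Prod>v \<in> Poly_Mapping.keys m. s v ^ Poly_Mapping.lookup m v)"

lemma mon_superset: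
  assumes "finite K" "Poly_Mapping.keys m \<subseteq> K"
  shows "mon s m = (\<Prod>v \<in> K. s v ^ Poly_Mapping.lookup m v)"
  unfolding mon_def
  by (rule prod.mono_neutral_left) (use assms in \<open>auto simp: in_keys_iff\<close>)

lemma mon_add: "mon s (m1 + m2) = mon s m1 * mon s m2"
proof -
  let ?K = "Poly_Mapping.keys m1 \<union> Poly_Mapping.keys m2"
  have "mon s (m1 + m2) = (\<Prod>v \<in> ?K. s v ^ Poly_Mapping.lookup (m1 + m2) v)"
    by (rule mon_superset) (simp_all add: keys_add)
  also have "\<dots> = (\<Prod>v \<in> ?K. s v ^ Poly_Mapping.lookup m1 v) * (\<Prod>v \<in> ?K. s v ^ Poly_Mapping.lookup m2 v)"
    by (simp add: lookup_add power_add prod.distrib)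
  also have "\<dots> = mon s m1 * mon s m2"
    by (simp add: mon_superset[of ?K m1] mon_superset[of ?K m2])
  finally show ?thesis .
qed

lemma mon_0[simp]: "mon s 0 = 1"
  by (simp add: mon_def)

lemma mon_single_var[simp]: "mon s (Poly_Mapping.single v k) = s v ^ k"
  by (cases "k = 0") (simp_all add: mon_def)

lemma subst_superset:
  assumes "finite K" "Poly_Mapping.keys p \<subseteq> K"
  shows "subst s p = (\<Sum>m \<in> K. mconst (Poly_Mapping.lookup p m) * mon s m)"
  unfolding subst_def mon_def[symmetric]
  by (rule sum.mono_neutral_left) (use assms in \<open>auto simp: in_keys_iff\<close>)

lemma subst_add: "subst s (p + q) = subst s p + subst s q"
proof -
  let ?K = "Poly_Mapping.keys p \<union> Poly_Mapping.keys q"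
  have "subst s (p + q) = (\<Sum>m \<in> ?K. mconst (Poly_Mapping.lookup (p + q) m) * mon s m)"
    by (rule subst_superset) (simp_all add: keys_add)
  also have "\<dots> = (\<Sum>m \<in> ?K. mconst (Poly_Mapping.lookup p m) * mon s m) + (\<Sum>m \<in> ?K. mconst (Poly_Mapping.lookup q m) * mon s m)"
    by (simp add: lookup_add mconst_add distrib_right sum.distrib)
  also have "\<dots> = subst s p + subst s q"
    by (simp add: subst_superset[of ?K p] subst_superset[of ?K q])
  finally show ?thesis .
qed

lemma subst_0[simp]: "subst s 0 = 0"
  by (simp add: subst_def)

lemma subst_uminus: "subst s (- p) = - subst s p"
  using subst_add[of s p "- p"] by (simp add: eq_neg_iff_add_eq_0 add.commute)

lemma subst_diff: "subst s (p - q) = subst s p - subst s q"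
  using subst_add[of s p "- q"] by (simp add: subst_uminus)

lemma subst_sum: "subst s (\<Sum>i\<in>A. f i) = (\<Sum>i\<in>A. subst s (f i))"
  by (induction A rule: infinite_finite_induct) (simp_all add: subst_add)

lemma subst_single: "subst s (Poly_Mapping.single m c) = mconst c * mon s m"
  by (subst subst_superset[of "{m}"]) auto

lemma expansion: "p = (\<Sum>m \<in> Poly_Mapping.keys p. Poly_Mapping.single m (Poly_Mapping.lookup p m))"
proof (rule poly_mapping_eqI)
  fix k
  show "Poly_Mapping.lookup p k = Poly_Mapping.lookup (\<Sum>m \<in> Poly_Mapping.keys p. Poly_Mapping.single m (Poly_Mapping.lookup p m)) k"
    by (simp add: lookup_sum lookup_single when_def in_keys_iff)
qed

lemma subst_mult: "subst s (p * q) = subst s p * subst s q"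
proof -
  let ?P = "Poly_Mapping.keys p" and ?Q = "Poly_Mapping.keys q"
  let ?lp = "Poly_Mapping.lookup p" and ?lq = "Poly_Mapping.lookup q"
  have "p * q = (\<Sum>a\<in>?P. Poly_Mapping.single a (?lp a)) * (\<Sum>b\<in>?Q. Poly_Mapping.single b (?lq b))"
    using expansion[of p] expansion[of q] by simp
  also have "\<dots> = (\<Sum>a\<in>?P. \<Sum>b\<in>?Q. Poly_Mapping.single (a + b) (?lp a * ?lq b))"
    by (simp add: sum_product mult_single)
  finally have pq: "p * q = \<dots>" .
  have "subst s (p * q) = (\<Sum>a\<in>?P. \<Sum>b\<in>?Q. (mconst (?lp a) * mon s a) * (mconst (?lq b) * mon s b))"
    unfolding pq subst_sum subst_single mon_add mconst_mult by (simp add: ac_simps)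
  also have "\<dots> = (\<Sum>a\<in>?P. mconst (?lp a) * mon s a) * (\<Sum>b\<in>?Q. mconst (?lq b) * mon s b)"
    by (simp add: sum_product)
  also have "\<dots> = subst s p * subst s q"
    by (simp add: subst_def mon_def)
  finally show ?thesis .
qed

lemma subst_mconst[simp]: "subst s (mconst c) = mconst c"
  by (simp add: mconst_def subst_single)

lemma subst_1[simp]: "subst s 1 = 1"
  using subst_mconst[of s 1] by simp

lemma subst_mvar[simp]: "subst s (mvar v) = s v"
  by (simp add: mvar_def subst_single)

lemma subst_power: "subst s (p ^ k) = subst s p ^ k"
  by (induction k) (simp_all add: subst_mult)

lemma subst_prod: "subst s (\<Prod>i\<in>A. f i) = (\<Prod>i\<in>A. subst s (f i))"
  by (induction A rule: infinite_finite_induct) (simp_all add: subst_mult)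

lemma subst_mon: "subst s (mon t m) = mon (\<lambda>v. subst s (t v)) m"
  by (simp add: mon_def subst_prod subst_power)

lemma subst_comp: "subst s (subst t p) = subst (\<lambda>v. subst s (t v)) p"
  unfolding subst_def[of t] mon_def[symmetric]
  by (simp add: subst_sum subst_mult subst_mon) (simp add: subst_def mon_def)

lemma subst_cong:
  assumes "\<And>v. v \<in> vars p \<Longrightarrow> s v = t v"
  shows "subst s p = subst t p"
  unfolding subst_def
  by (rule sum.cong[OF refl], rule arg_cong[where f="\<lambda>x. _ * x"], rule prod.cong[OF refl])
     (use assms in \<open>force simp: vars_def\<close>)



definition VS :: "('v \<Rightarrow> bool) \<Rightarrow> 'v mpoly set" where
  "VS P = {p. \<forall>v \<in> vars p. P v}"

lemma VS_iff: "p \<in> VS P \<longleftrightarrow> (\<forall>m \<in> Poly_Mapping.keys p. \<forall>v \<in> Poly_Mapping.keys m. P v)"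
  by (auto simp: VS_def vars_def)

lemma VS_0[simp]: "0 \<in> VS P" by (simp add: VS_iff)

lemma VS_add: "p \<in> VS P \<Longrightarrow> q \<in> VS P \<Longrightarrow> p + q \<in> VS P"
  using keys_add[of p q] unfolding VS_iff by blast

lemma VS_uminus: "p \<in> VS P \<Longrightarrow> - p \<in> VS P"
  unfolding VS_iff by (simp add: keys_minus)

lemma VS_diff: "p \<in> VS P \<Longrightarrow> q \<in> VS P \<Longrightarrow> p - q \<in> VS P"
  using VS_add[of p P "- q"] VS_uminus[of q P] by simp

lemma VS_mult: "p \<in> VS P \<Longrightarrow> q \<in> VS P \<Longrightarrow> p * q \<in> VS P"
  unfolding VS_iff
proof (intro ballI)
  fix m v assume p: "\<forall>m\<in>Poly_Mapping.keys p. \<forall>v\<in>Poly_Mapping.keys m. P v"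
    and q: "\<forall>m\<in>Poly_Mapping.keys q. \<forall>v\<in>Poly_Mapping.keys m. P v"
    and m: "m \<in> Poly_Mapping.keys (p * q)" and v: "v \<in> Poly_Mapping.keys m"
  from m keys_mult[of p q] obtain a b where "m = a + b" "a \<in> Poly_Mapping.keys p" "b \<in> Poly_Mapping.keys q" by blast
  with v keys_add[of a b] p q show "P v" by blast
qed

lemma VS_single: "(\<And>v. v \<in> Poly_Mapping.keys m \<Longrightarrow> P v) \<Longrightarrow> Poly_Mapping.single m c \<in> VS P"
  unfolding VS_iff by (cases "c = 0") auto

lemma VS_mconst[simp]: "mconst c \<in> VS P"
  unfolding mconst_def by (rule VS_single) simp

lemma VS_1[simp]: "1 \<in> VS P"
  using VS_mconst[of 1 P] by simp

lemma VS_mvar: "P v \<Longrightarrow> mvar v \<in> VS P"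
  unfolding mvar_def by (rule VS_single) simp

lemma VS_sum: "(\<And>i. i \<in> A \<Longrightarrow> f i \<in> VS P) \<Longrightarrow> (\<Sum>i\<in>A. f i) \<in> VS P"
  by (induction A rule: infinite_finite_induct) (auto intro: VS_add)

lemma VS_prod: "(\<And>i. i \<in> A \<Longrightarrow> f i \<in> VS P) \<Longrightarrow> (\<Prod>i\<in>A. f i) \<in> VS P"
  by (induction A rule: infinite_finite_induct) (auto intro: VS_mult)

lemma VS_power: "p \<in> VS P \<Longrightarrow> p ^ k \<in> VS P"
  by (induction k) (auto intro: VS_mult)

lemma VS_subst:
  assumes "\<And>v. v \<in> vars p \<Longrightarrow> s v \<in> VS Q"
  shows "subst s p \<in> VS Q"
  unfolding subst_def
  by (intro VS_sum VS_mult VS_prod VS_power VS_mconst assms) (auto simp: vars_def)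

lemma Rn_VS: "Rn n = VS (\<lambda>v. ridx v < n)"
  by (simp add: Rn_def VS_def)
lemma Cn_VS: "Cn n = VS (\<lambda>v. cidx v < n)"
  by (simp add: Cn_def VS_def)

definition gen :: "nat \<Rightarrow> nat \<Rightarrow> rvar mpoly" where
  "gen r i = mvar (Xv i) * mvar (Yv i) - mvar (Zv i) ^ r"

lemma In_gen_def: "In r n = {p. \<exists>a. (\<forall>i<n. a i \<in> Rn n) \<and> p = (\<Sum>i<n. a i * gen r i)}"
  by (simp add: In_def gen_def)

lemma In_0[simp]: "0 \<in> In r n"
  unfolding In_gen_def by (rule CollectI, rule exI[of _ "\<lambda>_. 0"]) (simp add: Rn_VS)

lemma In_add: "p \<in> In r n \<Longrightarrow> q \<in> In r n \<Longrightarrow> p + q \<in> In r n"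
  unfolding In_gen_def
proof (clarify)
  fix a b assume a: "\<forall>i<n. a i \<in> Rn n" and b: "\<forall>i<n. b i \<in> Rn n"
  show "\<exists>c. (\<forall>i<n. c i \<in> Rn n) \<and> (\<Sum>i<n. a i * gen r i) + (\<Sum>i<n. b i * gen r i) = (\<Sum>i<n. c i * gen r i)"
    by (rule exI[of _ "\<lambda>i. a i + b i"]) (use a b in \<open>auto simp: Rn_VS VS_add sum.distrib distrib_right\<close>)
qed

lemma In_mult: "b \<in> Rn n \<Longrightarrow> p \<in> In r n \<Longrightarrow> b * p \<in> In r n"
  unfolding In_gen_def
proof (clarify)
  fix a assume a: "\<forall>i<n. a i \<in> Rn n" and b: "b \<in> Rn n"
  show "\<exists>c. (\<forall>i<n. c i \<in> Rn n) \<and> b * (\<Sum>i<n. a i * gen r i) = (\<Sum>i<n. c i * gen r i)"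
    by (rule exI[of _ "\<lambda>i. b * a i"]) (use a b in \<open>auto simp: Rn_VS VS_mult sum_distrib_left mult.assoc\<close>)
qed

lemma In_uminus: "p \<in> In r n \<Longrightarrow> - p \<in> In r n"
  using In_mult[of "- 1" n p r] by (simp add: Rn_VS VS_uminus)

lemma In_diff: "p \<in> In r n \<Longrightarrow> q \<in> In r n \<Longrightarrow> p - q \<in> In r n"
  using In_add[of p r n "- q"] In_uminus[of q r n] by simp

lemma In_sum: "(\<And>i. i \<in> A \<Longrightarrow> f i \<in> In r n) \<Longrightarrow> (\<Sum>i\<in>A. f i) \<in> In r n"
  by (induction A rule: infinite_finite_induct) (auto intro: In_add)

lemma gen_In: "i < n \<Longrightarrow> gen r i \<in> In r n"
  unfolding In_gen_def
proof (rule CollectI, rule exI[of _ "\<lambda>j. if j = i then 1 else 0"], intro conjI)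
  assume i: "i < n"
  show "\<forall>j<n. (if j = i then 1 else 0) \<in> Rn n" by (simp add: Rn_VS)
  have "(\<Sum>j<n. (if j = i then 1 else 0) * gen r j) = (\<Sum>j<n. if j = i then gen r j else 0)"
    by (rule sum.cong) auto
  also have "\<dots> = gen r i" using i by simp
  finally show "gen r i = (\<Sum>j<n. (if j = i then 1 else 0) * gen r j)" by simp
qed

lemma In_Rn: "In r n \<subseteq> Rn n"
proof
  fix p assume "p \<in> In r n"
  then obtain a where a: "\<forall>i<n. a i \<in> Rn n" and p: "p = (\<Sum>i<n. a i * gen r i)"
    unfolding In_gen_def by blast
  show "p \<in> Rn n" unfolding p Rn_VS gen_def
    by (intro VS_sum VS_mult VS_diff VS_power VS_mvar) (use a in \<open>auto simp: Rn_VS\<close>)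
qed

lemma rrename_comp: "rrename \<tau> (rrename \<sigma> v) = rrename (\<tau> \<circ> \<sigma>) v"
  by (cases v) simp_all

lemma ridx_rrename: "ridx (rrename \<sigma> v) = \<sigma> (ridx v)"
  by (cases v) simp_all

lemma permR_comp: "permR \<tau> (permR \<sigma> p) = permR (\<tau> \<circ> \<sigma>) p"
  unfolding permR_def subst_comp by (simp add: rrename_comp)

lemma permR_add: "permR \<sigma> (p + q) = permR \<sigma> p + permR \<sigma> q"
  by (simp add: permR_def subst_add)
lemma permR_mult: "permR \<sigma> (p * q) = permR \<sigma> p * permR \<sigma> q"
  by (simp add: permR_def subst_mult)
lemma permR_sum: "permR \<sigma> (\<Sum>i\<in>A. f i) = (\<Sum>i\<in>A. permR \<sigma> (f i))"
  by (simp add: permR_def subst_sum)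
lemma permR_mconst[simp]: "permR \<sigma> (mconst c) = mconst c"
  by (simp add: permR_def)

lemma permR_Rn: "\<sigma> permutes {..<n} \<Longrightarrow> p \<in> Rn n \<Longrightarrow> permR \<sigma> p \<in> Rn n"
  unfolding permR_def Rn_VS
proof (rule VS_subst, rule VS_mvar)
  fix v assume "\<sigma> permutes {..<n}" "p \<in> VS (\<lambda>v. ridx v < n)" "v \<in> vars p"
  then show "ridx (rrename \<sigma> v) < n"
    using permutes_in_image[of \<sigma> "{..<n}" "ridx v"] by (auto simp: ridx_rrename VS_def)
qed

abbreviation Perms :: "nat \<Rightarrow> (nat \<Rightarrow> nat) set" where
  "Perms n \<equiv> {\<sigma>. \<sigma> permutes {..<n}}"

lemma finite_Perms[simp]: "finite (Perms n)"
  by (rule finite_permutations) simp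

lemma card_Perms: "card (Perms n) = fact n"
  by (rule card_permutations) simp_all

lemma sum_Perms_reindex:
  assumes "\<tau> permutes {..<n}"
  shows "(\<Sum>\<sigma>\<in>Perms n. f (\<tau> \<circ> \<sigma>)) = (\<Sum>\<sigma>\<in>Perms n. f \<sigma>)"
proof -
  have "bij_betw ((\<circ>) \<tau>) (Perms n) (Perms n)"
  proof (rule bij_betwI[where g="(\<circ>) (inv \<tau>)"])
    show "(\<circ>) \<tau> \<in> Perms n \<rightarrow> Perms n" using assms by (auto intro: permutes_compose)
    show "(\<circ>) (inv \<tau>) \<in> Perms n \<rightarrow> Perms n" using assms by (auto intro: permutes_compose permutes_inv)
    show "inv \<tau> \<circ> (\<tau> \<circ> x) = x" for x
      using permutes_inv_o(2)[OF assms] by (simp add: comp_assoc[symmetric])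
    show "\<tau> \<circ> (inv \<tau> \<circ> y) = y" for y
      using permutes_inv_o(1)[OF assms] by (simp add: comp_assoc[symmetric])
  qed
  then show ?thesis by (rule sum.reindex_bij_betw)
qed

definition avg :: "nat \<Rightarrow> rvar mpoly \<Rightarrow> rvar mpoly" where
  "avg n p = mconst (1 / of_nat (fact n)) * (\<Sum>\<sigma>\<in>Perms n. permR \<sigma> p)"

lemma avg_RnS:
  assumes "p \<in> Rn n"
  shows "avg n p \<in> RnS n"
proof -
  have "avg n p \<in> Rn n"
    unfolding avg_def using permR_Rn[OF _ assms]
    by (auto simp: Rn_VS intro!: VS_mult VS_sum)
  moreover have "permR \<tau> (avg n p) = avg n p" if \<tau>: "\<tau> permutes {..<n}" for \<tau>
  proof -
    have "permR \<tau> (avg n p) = mconst (1 / of_nat (fact n)) * (\<Sum>\<sigma>\<in>Perms n. permR (\<tau> \<circ> \<sigma>) p)"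
      by (simp add: avg_def permR_mult permR_sum permR_comp)
    also have "\<dots> = avg n p"
      unfolding avg_def by (subst sum_Perms_reindex[OF \<tau>, of "\<lambda>\<sigma>. permR \<sigma> p"]) simp
    finally show ?thesis .
  qed
  ultimately show ?thesis by (simp add: RnS_def)
qed

lemma of_nat_mpoly: "(of_nat k :: 'v mpoly) = mconst (of_nat k)"
  by (simp add: mconst_def)

lemma avg_const:
  "mconst (1 / of_nat (fact n)) * (\<Sum>\<sigma>\<in>Perms n. q) = (q :: 'v mpoly)"
proof -
  have "(\<Sum>\<sigma>\<in>Perms n. q) = mconst (of_nat (fact n)) * q"
    by (simp add: card_Perms of_nat_mpoly)
  then show ?thesis
    by (simp add: mult.assoc[symmetric] mconst_mult[symmetric])
qed

lemma part3:
  assumes "p \<in> Rn n" "\<forall>\<sigma>. \<sigma> permutes {..<n} \<longrightarrow> permR \<sigma> p - p \<in> In r n"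
  shows "\<exists>q \<in> RnS n. p - q \<in> In r n"
proof (intro bexI)
  show "avg n p \<in> RnS n" by (rule avg_RnS[OF assms(1)])
  have "p - avg n p = mconst (1 / of_nat (fact n)) * (\<Sum>\<sigma>\<in>Perms n. p - permR \<sigma> p)"
    unfolding avg_def sum_subtractf right_diff_distrib avg_const ..
  also have "\<dots> \<in> In r n"
    using assms(2) by (intro In_mult In_sum) (auto simp: Rn_VS intro: In_uminus[of "_ - p", simplified])
  finally show "p - avg n p \<in> In r n" .
qed



definition img :: "nat \<Rightarrow> rvar \<Rightarrow> cvar mpoly" where
  "img r v = (case v of
       Xv i \<Rightarrow> mvar (CX i) ^ r
     | Yv i \<Rightarrow> mvar (CY i) ^ r
     | Zv i \<Rightarrow> mvar (CX i) * mvar (CY i))"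

lemma phi_img: "phi r p = subst (img r) p"
  unfolding phi_def img_def ..

lemma mvar_power: "mvar v ^ k = Poly_Mapping.single (Poly_Mapping.single v k) 1"
proof (induction k)
  case 0 then show ?case by simp
next
  case (Suc k)
  then show ?case by (simp add: mvar_def mult_single single_add[symmetric])
qed

lemma prod_singles:
  "finite K \<Longrightarrow> (\<Prod>v\<in>K. Poly_Mapping.single (f v) (c v)) = Poly_Mapping.single (\<Sum>v\<in>K. f v) (\<Prod>v\<in>K. c v)"
  by (induction K rule: finite_induct) (simp_all add: mult_single)

definition hexp :: "nat \<Rightarrow> rvar \<Rightarrow> nat \<Rightarrow> (cvar \<Rightarrow>\<^sub>0 nat)" where
  "hexp r v k = (case v of
       Xv i \<Rightarrow> Poly_Mapping.single (CX i) (r * k)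
     | Yv i \<Rightarrow> Poly_Mapping.single (CY i) (r * k)
     | Zv i \<Rightarrow> Poly_Mapping.single (CX i) k + Poly_Mapping.single (CY i) k)"

lemma img_power: "img r v ^ k = Poly_Mapping.single (hexp r v k) 1"
  by (cases v) (simp_all add: img_def hexp_def power_mult[symmetric] power_mult_distrib, simp_all add: mvar_power mult_single)

definition F :: "nat \<Rightarrow> (rvar \<Rightarrow>\<^sub>0 nat) \<Rightarrow> (cvar \<Rightarrow>\<^sub>0 nat)" where
  "F r m = (\<Sum>v\<in>Poly_Mapping.keys m. hexp r v (Poly_Mapping.lookup m v))"

lemma phi_single: "phi r (Poly_Mapping.single m c) = Poly_Mapping.single (F r m) c"
  by (simp add: phi_img subst_single mon_def img_power prod_singles F_def mconst_single)

lemma phi_expand: "phi r p = (\<Sum>m\<in>Poly_Mapping.keys p. Poly_Mapping.single (F r m) (Poly_Mapping.lookup p m))"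
proof -
  have "phi r p = phi r (\<Sum>m \<in> Poly_Mapping.keys p. Poly_Mapping.single m (Poly_Mapping.lookup p m))"
    by (rule arg_cong, rule expansion)
  also have "\<dots> = (\<Sum>m\<in>Poly_Mapping.keys p. Poly_Mapping.single (F r m) (Poly_Mapping.lookup p m))"
    by (simp add: phi_img subst_sum phi_single[unfolded phi_img])
  finally show ?thesis .
qed

lemma sum_keys_delta:
  "(\<Sum>v\<in>Poly_Mapping.keys m. if v = a then f (Poly_Mapping.lookup m v) else 0) = (f (Poly_Mapping.lookup m a) :: 'b::comm_monoid_add)"
  if "f 0 = 0"
  using that by (simp add: sum.delta in_keys_iff)

lemma lookup_F_CX: "Poly_Mapping.lookup (F r m) (CX i) = r * Poly_Mapping.lookup m (Xv i) + Poly_Mapping.lookup m (Zv i)"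
proof -
  have "Poly_Mapping.lookup (F r m) (CX i) = (\<Sum>v\<in>Poly_Mapping.keys m.
      (if v = Xv i then r * Poly_Mapping.lookup m v else 0) + (if v = Zv i then Poly_Mapping.lookup m v else 0))"
    unfolding F_def lookup_sum
    by (rule sum.cong[OF refl]) (auto simp: hexp_def lookup_add lookup_single split: rvar.split)
  also have "\<dots> = r * Poly_Mapping.lookup m (Xv i) + Poly_Mapping.lookup m (Zv i)"
    by (simp add: sum.distrib sum_keys_delta[where f="\<lambda>x. r * x"] sum_keys_delta[where f="\<lambda>x. x"] in_keys_iff)
  finally show ?thesis .
qed

lemma lookup_F_CY: "Poly_Mapping.lookup (F r m) (CY i) = r * Poly_Mapping.lookup m (Yv i) + Poly_Mapping.lookup m (Zv i)"
proof -
  have "Poly_Mapping.lookup (F r m) (CY i) = (\<Sum>v\<in>Poly_Mapping.keys m.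
      (if v = Yv i then r * Poly_Mapping.lookup m v else 0) + (if v = Zv i then Poly_Mapping.lookup m v else 0))"
    unfolding F_def lookup_sum
    by (rule sum.cong[OF refl]) (auto simp: hexp_def lookup_add lookup_single split: rvar.split)
  also have "\<dots> = r * Poly_Mapping.lookup m (Yv i) + Poly_Mapping.lookup m (Zv i)"
    by (simp add: sum.distrib sum_keys_delta[where f="\<lambda>x. r * x"] sum_keys_delta[where f="\<lambda>x. x"] in_keys_iff)
  finally show ?thesis .
qed

definition reduced :: "nat \<Rightarrow> (rvar \<Rightarrow>\<^sub>0 nat) \<Rightarrow> bool" where
  "reduced r m \<longleftrightarrow> (\<forall>i. Poly_Mapping.lookup m (Zv i) < r)"

lemma divmod_unique:
  fixes a b z w r :: nat
  assumes "r * a + z = r * b + w" "z < r" "w < r"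
  shows "a = b \<and> z = w"
proof -
  have "(r * a + z) div r = a" "(r * a + z) mod r = z" using assms(2) by auto
  moreover have "(r * b + w) div r = b" "(r * b + w) mod r = w" using assms(3) by auto
  ultimately show ?thesis using assms(1) by metis
qed

lemma F_inj:
  assumes "reduced r m" "reduced r m'" "F r m = F r m'"
  shows "m = m'"
proof (rule poly_mapping_eqI)
  fix v
  have X: "Poly_Mapping.lookup m (Xv i) = Poly_Mapping.lookup m' (Xv i) \<and> Poly_Mapping.lookup m (Zv i) = Poly_Mapping.lookup m' (Zv i)" for i
  proof (rule divmod_unique)
    show "r * Poly_Mapping.lookup m (Xv i) + Poly_Mapping.lookup m (Zv i) = r * Poly_Mapping.lookup m' (Xv i) + Poly_Mapping.lookup m' (Zv i)"
      using lookup_F_CX[of r m i] lookup_F_CX[of r m' i] assms(3) by simp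
  qed (use assms in \<open>simp_all add: reduced_def\<close>)
  have Y: "Poly_Mapping.lookup m (Yv i) = Poly_Mapping.lookup m' (Yv i)" for i
  proof -
    have "Poly_Mapping.lookup m (Yv i) = Poly_Mapping.lookup m' (Yv i) \<and> Poly_Mapping.lookup m (Zv i) = Poly_Mapping.lookup m' (Zv i)"
    proof (rule divmod_unique)
      show "r * Poly_Mapping.lookup m (Yv i) + Poly_Mapping.lookup m (Zv i) = r * Poly_Mapping.lookup m' (Yv i) + Poly_Mapping.lookup m' (Zv i)"
        using lookup_F_CY[of r m i] lookup_F_CY[of r m' i] assms(3) by simp
    qed (use assms in \<open>simp_all add: reduced_def\<close>)
    then show ?thesis by simp
  qed
  show "Poly_Mapping.lookup m v = Poly_Mapping.lookup m' v"
    using X Y by (cases v) auto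
qed

definition gexp :: "nat \<Rightarrow> cvar \<Rightarrow> nat \<Rightarrow> (rvar \<Rightarrow>\<^sub>0 nat)" where
  "gexp r v k = (case v of
       CX i \<Rightarrow> Poly_Mapping.single (Xv i) (k div r) + Poly_Mapping.single (Zv i) (k mod r)
     | CY i \<Rightarrow> Poly_Mapping.single (Yv i) (k div r))"

definition G :: "nat \<Rightarrow> (cvar \<Rightarrow>\<^sub>0 nat) \<Rightarrow> (rvar \<Rightarrow>\<^sub>0 nat)" where
  "G r a = (\<Sum>v\<in>Poly_Mapping.keys a. gexp r v (Poly_Mapping.lookup a v))"

lemma lookup_G_X: "Poly_Mapping.lookup (G r a) (Xv i) = Poly_Mapping.lookup a (CX i) div r"
proof -
  have "Poly_Mapping.lookup (G r a) (Xv i) = (\<Sum>v\<in>Poly_Mapping.keys a. if v = CX i then Poly_Mapping.lookup a v div r else 0)"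
    unfolding G_def lookup_sum
    by (rule sum.cong[OF refl]) (auto simp: gexp_def lookup_add lookup_single split: cvar.split)
  then show ?thesis by (simp add: sum_keys_delta[where f="\<lambda>x. x div r"] in_keys_iff)
qed

lemma lookup_G_Z: "Poly_Mapping.lookup (G r a) (Zv i) = Poly_Mapping.lookup a (CX i) mod r"
proof -
  have "Poly_Mapping.lookup (G r a) (Zv i) = (\<Sum>v\<in>Poly_Mapping.keys a. if v = CX i then Poly_Mapping.lookup a v mod r else 0)"
    unfolding G_def lookup_sum
    by (rule sum.cong[OF refl]) (auto simp: gexp_def lookup_add lookup_single split: cvar.split)
  then show ?thesis by (simp add: sum_keys_delta[where f="\<lambda>x. x mod r"] in_keys_iff)
qed

lemma lookup_G_Y: "Poly_Mapping.lookup (G r a) (Yv i) = Poly_Mapping.lookup a (CY i) div r"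
proof -
  have "Poly_Mapping.lookup (G r a) (Yv i) = (\<Sum>v\<in>Poly_Mapping.keys a. if v = CY i then Poly_Mapping.lookup a v div r else 0)"
    unfolding G_def lookup_sum
    by (rule sum.cong[OF refl]) (auto simp: gexp_def lookup_add lookup_single split: cvar.split)
  then show ?thesis by (simp add: sum_keys_delta[where f="\<lambda>x. x div r"] in_keys_iff)
qed

lemma F_G:
  assumes "\<And>i. Poly_Mapping.lookup a (CX i) mod r = Poly_Mapping.lookup a (CY i) mod r"
  shows "F r (G r a) = a"
proof (rule poly_mapping_eqI)
  fix v show "Poly_Mapping.lookup (F r (G r a)) v = Poly_Mapping.lookup a v"
  proof (cases v)
    case (CX i) then show ?thesis by (simp add: lookup_F_CX lookup_G_X lookup_G_Z)
  next
    case (CY i) then show ?thesis using assms[of i] by (simp add: lookup_F_CY lookup_G_Y lookup_G_Z)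
  qed
qed

lemma keys_G: "w \<in> Poly_Mapping.keys (G r a) \<Longrightarrow> \<exists>v \<in> Poly_Mapping.keys a. cidx v = ridx w"
proof (cases w)
  case (Xv i) assume "w \<in> Poly_Mapping.keys (G r a)"
  then show ?thesis using Xv by (cases "Poly_Mapping.lookup a (CX i) = 0") (auto simp: in_keys_iff lookup_G_X intro!: bexI[of _ "CX i"])
next
  case (Yv i) assume "w \<in> Poly_Mapping.keys (G r a)"
  then show ?thesis using Yv by (cases "Poly_Mapping.lookup a (CY i) = 0") (auto simp: in_keys_iff lookup_G_Y intro!: bexI[of _ "CY i"])
next
  case (Zv i) assume "w \<in> Poly_Mapping.keys (G r a)"
  then show ?thesis using Zv by (cases "Poly_Mapping.lookup a (CX i) = 0") (auto simp: in_keys_iff lookup_G_Z intro!: bexI[of _ "CX i"])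
qed



lemma phi_gen: "phi r (gen r i) = 0"
  by (simp add: phi_img gen_def subst_diff subst_mult subst_power img_def power_mult_distrib)

lemma phi_In: "p \<in> In r n \<Longrightarrow> phi r p = 0"
  unfolding In_gen_def by (auto simp: phi_img subst_sum subst_mult phi_gen[unfolded phi_img])

definition mu :: "nat \<Rightarrow> (rvar \<Rightarrow>\<^sub>0 nat) \<Rightarrow> nat" where
  "mu n m = (\<Sum>i<n. Poly_Mapping.lookup m (Zv i))"

lemma reduce_mon:
  assumes r: "r \<ge> 1"
  shows "(\<forall>v\<in>Poly_Mapping.keys m. ridx v < n) \<Longrightarrow>
    \<exists>m'. reduced r m' \<and> Poly_Mapping.single m 1 - Poly_Mapping.single m' 1 \<in> In r n"
proof (induction "mu n m" arbitrary: m rule: less_induct)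
  case less
  show ?case
  proof (cases "reduced r m")
    case True
    then show ?thesis by (intro exI[of _ m]) simp
  next
    case False
    then obtain i where ge: "Poly_Mapping.lookup m (Zv i) \<ge> r" by (auto simp: reduced_def not_less)
    then have "Zv i \<in> Poly_Mapping.keys m" using r by (auto simp: in_keys_iff)
    then have i: "i < n" using less.prems by force
    define m1 where "m1 = m - Poly_Mapping.single (Zv i) r"
    define m2 where "m2 = m1 + (Poly_Mapping.single (Xv i) 1 + Poly_Mapping.single (Yv i) 1)"
    have hm: "m = m1 + Poly_Mapping.single (Zv i) r"
      by (rule poly_mapping_eqI) (use ge in \<open>auto simp: m1_def lookup_add lookup_minus lookup_single when_def\<close>)
    have k1: "Poly_Mapping.keys m1 \<subseteq> Poly_Mapping.keys m"
      by (auto simp: m1_def in_keys_iff lookup_minus)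
    have k2: "\<forall>v\<in>Poly_Mapping.keys m2. ridx v < n"
    proof
      fix v assume "v \<in> Poly_Mapping.keys m2"
      then have "v \<in> Poly_Mapping.keys m1 \<or> v = Xv i \<or> v = Yv i"
        unfolding m2_def using keys_add[of m1 "Poly_Mapping.single (Xv i) 1 + Poly_Mapping.single (Yv i) 1"]
          keys_add[of "Poly_Mapping.single (Xv i) 1" "Poly_Mapping.single (Yv i) (1::nat)"] by auto
      then show "ridx v < n" using k1 less.prems i by auto
    qed
    have lz: "Poly_Mapping.lookup m (Zv j) = Poly_Mapping.lookup m2 (Zv j) + (if j = i then r else 0)" for j
      by (subst hm) (simp add: m2_def lookup_add lookup_single when_def)
    have "mu n m = mu n m2 + (\<Sum>j<n. if j = i then r else 0)"
      unfolding mu_def lz sum.distrib ..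
    also have "\<dots> = mu n m2 + r" using i by simp
    finally have "mu n m2 < mu n m" using r by simp
    from less.hyps[OF this k2] obtain m' where m': "reduced r m'"
      "Poly_Mapping.single m2 1 - Poly_Mapping.single m' 1 \<in> In r n" by blast
    have XY: "mvar (Xv i) * mvar (Yv i) = Poly_Mapping.single (Poly_Mapping.single (Xv i) 1 + Poly_Mapping.single (Yv i) 1) (1::complex)"
      by (simp add: mvar_def mult_single)
    have "Poly_Mapping.single m 1 - Poly_Mapping.single m2 1 = - Poly_Mapping.single m1 1 * gen r i"
    proof -
      have "Poly_Mapping.single m (1::complex) = Poly_Mapping.single m1 1 * mvar (Zv i) ^ r"
        by (subst hm) (simp add: mvar_power mult_single)
      moreover have "Poly_Mapping.single m2 (1::complex) = Poly_Mapping.single m1 1 * (mvar (Xv i) * mvar (Yv i))"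
        by (simp add: XY m2_def mult_single)
      ultimately show ?thesis by (simp add: gen_def algebra_simps)
    qed
    also have "\<dots> \<in> In r n"
      by (rule In_mult[OF _ gen_In[OF i]])
        (use k1 less.prems in \<open>auto simp: Rn_VS intro!: VS_uminus VS_single\<close>)
    finally have "Poly_Mapping.single m 1 - Poly_Mapping.single m' 1 \<in> In r n"
      using In_add[OF _ m'(2)] by fastforce
    with m'(1) show ?thesis by blast
  qed
qed

lemma keys_eq_empty': "Poly_Mapping.keys c = {} \<Longrightarrow> c = 0"
  by (rule poly_mapping_eqI) (auto simp: in_keys_iff)

lemma kernel:
  assumes r: "r \<ge> 1" and p: "p \<in> Rn n" and z: "phi r p = 0"
  shows "p \<in> In r n"
proof -
  have "\<forall>m\<in>Poly_Mapping.keys p. \<exists>m'. reduced r m' \<and> Poly_Mapping.single m 1 - Poly_Mapping.single m' 1 \<in> In r n"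
    using reduce_mon[OF r] p by (auto simp: Rn_VS VS_iff)
  then obtain g where g: "\<And>m. m \<in> Poly_Mapping.keys p \<Longrightarrow> reduced r (g m) \<and> Poly_Mapping.single m 1 - Poly_Mapping.single (g m) 1 \<in> In r n"
    by metis
  define p' where "p' = (\<Sum>m\<in>Poly_Mapping.keys p. Poly_Mapping.single (g m) (Poly_Mapping.lookup p m))"
  have "p - p' = (\<Sum>m\<in>Poly_Mapping.keys p. mconst (Poly_Mapping.lookup p m) * (Poly_Mapping.single m 1 - Poly_Mapping.single (g m) 1))"
  proof -
    have "p - p' = (\<Sum>m\<in>Poly_Mapping.keys p. Poly_Mapping.single m (Poly_Mapping.lookup p m)) - p'"
      by (subst expansion[of p]) (rule refl)
    then show ?thesis by (simp add: p'_def sum_subtractf right_diff_distrib mconst_single)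
  qed
  also have "\<dots> \<in> In r n"
    using g by (intro In_sum In_mult) (auto simp: Rn_VS)
  finally have d: "p - p' \<in> In r n" .
  have "phi r p' = phi r p - phi r (p - p')"
    by (simp add: phi_img subst_diff)
  then have z': "phi r p' = 0" using z phi_In[OF d] by simp
  have kp': "Poly_Mapping.keys p' \<subseteq> g ` Poly_Mapping.keys p"
  proof
    fix x assume "x \<in> Poly_Mapping.keys p'"
    then obtain m where "m \<in> Poly_Mapping.keys p" "x \<in> Poly_Mapping.keys (Poly_Mapping.single (g m) (Poly_Mapping.lookup p m))"
      using keys_sum[of "\<lambda>m. Poly_Mapping.single (g m) (Poly_Mapping.lookup p m)" "Poly_Mapping.keys p"]
      unfolding p'_def by blast
    then show "x \<in> g ` Poly_Mapping.keys p" by (auto split: if_splits)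
  qed
  have red: "\<And>x. x \<in> Poly_Mapping.keys p' \<Longrightarrow> reduced r x" using kp' g by blast
  have "Poly_Mapping.keys p' = {}"
  proof (rule ccontr)
    assume "Poly_Mapping.keys p' \<noteq> {}"
    then obtain m0 where m0: "m0 \<in> Poly_Mapping.keys p'" by blast
    have "0 = Poly_Mapping.lookup (phi r p') (F r m0)" using z' by simp
    also have "\<dots> = (\<Sum>m\<in>Poly_Mapping.keys p'. if m = m0 then Poly_Mapping.lookup p' m else 0)"
      unfolding phi_expand lookup_sum
    proof (rule sum.cong[OF refl])
      fix x assume x: "x \<in> Poly_Mapping.keys p'"
      have "x \<noteq> m0 \<Longrightarrow> F r x \<noteq> F r m0" using F_inj[OF red[OF x] red[OF m0]] by blast
      then show "Poly_Mapping.lookup (Poly_Mapping.single (F r x) (Poly_Mapping.lookup p' x)) (F r m0) =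
          (if x = m0 then Poly_Mapping.lookup p' x else 0)"
        by (auto simp: lookup_single when_def)
    qed
    also have "\<dots> = Poly_Mapping.lookup p' m0" using m0 by simp
    finally show False using m0 by (simp add: in_keys_iff)
  qed
  then have "p' = 0" by (rule keys_eq_empty')
  then show ?thesis using d by simp
qed



definition tt :: "(nat \<Rightarrow> complex) \<Rightarrow> (nat \<Rightarrow> nat) \<Rightarrow> cvar \<Rightarrow> cvar mpoly" where
  "tt \<zeta> \<sigma> v = (case v of
       CX i \<Rightarrow> mconst (\<zeta> i) * mvar (CX (\<sigma> i))
     | CY i \<Rightarrow> mconst (inverse (\<zeta> i)) * mvar (CY (\<sigma> i)))"

lemma gact_tt: "gact \<zeta> \<sigma> q = subst (tt \<zeta> \<sigma>) q"
  unfolding gact_def tt_def ..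

lemma gact_phi:
  assumes r: "r \<ge> 1" and z: "\<forall>i<n. \<zeta> i ^ r = 1" and p: "p \<in> Rn n"
  shows "gact \<zeta> \<sigma> (phi r p) = phi r (permR \<sigma> p)"
proof -
  have "gact \<zeta> \<sigma> (phi r p) = subst (\<lambda>v. subst (tt \<zeta> \<sigma>) (img r v)) p"
    by (simp add: gact_tt phi_img subst_comp)
  also have "\<dots> = subst (\<lambda>v. img r (rrename \<sigma> v)) p"
  proof (rule subst_cong)
    fix v assume "v \<in> vars p"
    then have i: "ridx v < n" using p by (auto simp: Rn_def)
    show "subst (tt \<zeta> \<sigma>) (img r v) = img r (rrename \<sigma> v)"
    proof (cases v)
      case (Xv i)
      then have "\<zeta> i ^ r = 1" using z \<open>ridx v < n\<close> by auto
      then show ?thesis using Xv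
        by (simp add: img_def subst_power tt_def power_mult_distrib mconst_power[symmetric])
    next
      case (Yv i)
      then have "\<zeta> i ^ r = 1" using z \<open>ridx v < n\<close> by auto
      then show ?thesis using Yv
        by (simp add: img_def subst_power tt_def power_mult_distrib mconst_power[symmetric] power_inverse)
    next
      case (Zv i)
      then have "\<zeta> i ^ r = 1" using z \<open>ridx v < n\<close> by auto
      then have "\<zeta> i \<noteq> 0" using r by (auto simp: power_0_left)
      then have "mconst (\<zeta> i) * mconst (inverse (\<zeta> i)) = (1 :: cvar mpoly)"
        by (simp add: mconst_mult[symmetric])
      then show ?thesis using Zv
        by (simp add: img_def subst_mult tt_def) (metis (no_types, lifting) mult.assoc mult.commute mult_1)
    qed
  qed
  also have "\<dots> = phi r (permR \<sigma> p)"
    by (simp add: phi_img permR_def subst_comp)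
  finally show ?thesis .
qed

lemma phi_Cn: "p \<in> Rn n \<Longrightarrow> phi r p \<in> Cn n"
  unfolding phi_img Cn_VS
proof (rule VS_subst)
  fix v assume "p \<in> Rn n" "v \<in> vars p"
  then have "ridx v < n" by (auto simp: Rn_def)
  then show "img r v \<in> VS (\<lambda>v. cidx v < n)"
    by (cases v) (auto simp: img_def intro!: VS_power VS_mult VS_mvar)
qed

lemma part1a:
  assumes r: "r \<ge> 1" and p: "p \<in> RnS n"
  shows "phi r p \<in> CZ r n"
proof -
  have pR: "p \<in> Rn n" using p by (simp add: RnS_def)
  show ?thesis
    unfolding CZ_def
  proof (intro CollectI conjI allI impI)
    show "phi r p \<in> Cn n" by (rule phi_Cn[OF pR])
    fix \<zeta> :: "nat \<Rightarrow> complex" and \<sigma> assume a: "\<sigma> permutes {..<n} \<and> (\<forall>i<n. \<zeta> i ^ r = 1)"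
    have "gact \<zeta> \<sigma> (phi r p) = phi r (permR \<sigma> p)"
      using gact_phi[OF r _ pR] a by blast
    also have "\<dots> = phi r p" using p a by (simp add: RnS_def)
    finally show "gact \<zeta> \<sigma> (phi r p) = phi r p" .
  qed
qed

definition coef :: "(nat \<Rightarrow> complex) \<Rightarrow> cvar \<Rightarrow> complex" where
  "coef \<zeta> v = (case v of CX i \<Rightarrow> \<zeta> i | CY i \<Rightarrow> inverse (\<zeta> i))"

lemma tt_id: "tt \<zeta> id v = mconst (coef \<zeta> v) * mvar v"
  by (cases v) (simp_all add: tt_def coef_def)

lemma tt_power: "tt \<zeta> id v ^ k = Poly_Mapping.single (Poly_Mapping.single v k) (coef \<zeta> v ^ k)"
  by (simp add: tt_id power_mult_distrib mconst_power[symmetric] mvar_power mconst_single)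

lemma gact_id_single:
  "gact \<zeta> id (Poly_Mapping.single a c) =
     Poly_Mapping.single a (c * (\<Prod>v\<in>Poly_Mapping.keys a. coef \<zeta> v ^ Poly_Mapping.lookup a v))"
  by (simp add: gact_tt subst_single mon_def tt_power prod_singles expansion[symmetric] mconst_single)

lemma root_inj:
  fixes a b r :: nat
  assumes r: "r \<ge> 1" and e: "cis (2 * pi / r) ^ a = cis (2 * pi / r) ^ b"
  shows "a mod r = b mod r"
proof -
  define x where "x = real a * (2 * pi / r)"
  define y where "y = real b * (2 * pi / r)"
  have "cis x = cis y" using e by (simp add: DeMoivre x_def y_def)
  then have "cis (x - y) = 1" by (simp add: cis_divide[symmetric])
  then have "cos (x - y) = 1" by (metis cis.sel(1) one_complex.sel(1))
  then obtain k :: int where k: "x - y = of_int k * 2 * pi" using cos_one_2pi_int by blast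
  have "(real a - real b) * (2 * pi / r) = x - y" by (simp add: x_def y_def left_diff_distrib diff_divide_distrib)
  then have "(real a - real b) * (2 * pi / r) = of_int k * 2 * pi" using k by simp
  then have eq: "(real a - real b) * (2 * pi / r) * r = of_int k * 2 * pi * r" by simp
  have r0: "real r \<noteq> 0" using r by simp
  have "(real a - real b) * (2 * pi) = (real a - real b) * (2 * pi / r) * r" using r0 by simp
  also have "\<dots> = (of_int k * r) * (2 * pi)" unfolding eq by (simp add: ac_simps)
  finally have "(real a - real b) * (2 * pi) = (of_int k * r) * (2 * pi)" .
  then have "real a - real b = of_int k * r" by simp
  then have "(of_int (int a - int b) :: real) = of_int (k * int r)" by simp
  then have "int a - int b = k * int r" by (rule of_int_eq_iff[THEN iffD1])
  then have "int a mod int r = int b mod int r" by (simp add: mod_eq_dvd_iff)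
  then show ?thesis by (metis of_nat_eq_iff zmod_int)
qed

lemma torus:
  assumes r: "r \<ge> 1" and q: "q \<in> CZ r n" and a: "a \<in> Poly_Mapping.keys q"
  shows "Poly_Mapping.lookup a (CX i) mod r = Poly_Mapping.lookup a (CY i) mod r"
proof (cases "i < n")
  case False
  have "q \<in> Cn n" using q by (simp add: CZ_def)
  then have "\<forall>v\<in>Poly_Mapping.keys a. cidx v < n" using a by (auto simp: Cn_VS VS_iff)
  then have "CX i \<notin> Poly_Mapping.keys a" "CY i \<notin> Poly_Mapping.keys a"
    using False by force+
  then show ?thesis by (simp add: in_keys_iff)
next
  case True
  define \<omega> where "\<omega> = cis (2 * pi / r)"
  define \<zeta> where "\<zeta> = (\<lambda>j. if j = i then \<omega> else 1)"
  have w1: "\<omega> ^ r = 1" using r by (simp add: \<omega>_def DeMoivre)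
  have "\<forall>j<n. \<zeta> j ^ r = 1" using w1 by (simp add: \<zeta>_def)
  then have fx: "gact \<zeta> id q = q" using q by (simp add: CZ_def permutes_id)
  define w where "w a = (\<Prod>v\<in>Poly_Mapping.keys a. coef \<zeta> v ^ Poly_Mapping.lookup a v)" for a
  have "gact \<zeta> id q = gact \<zeta> id (\<Sum>b\<in>Poly_Mapping.keys q. Poly_Mapping.single b (Poly_Mapping.lookup q b))"
    by (rule arg_cong, rule expansion)
  also have "\<dots> = (\<Sum>b\<in>Poly_Mapping.keys q. Poly_Mapping.single b (Poly_Mapping.lookup q b * w b))"
    by (simp add: gact_tt subst_sum gact_id_single[unfolded gact_tt] w_def)
  finally have "Poly_Mapping.lookup q a = Poly_Mapping.lookup (\<Sum>b\<in>Poly_Mapping.keys q. Poly_Mapping.single b (Poly_Mapping.lookup q b * w b)) a"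
    using fx by simp
  also have "\<dots> = (\<Sum>b\<in>Poly_Mapping.keys q. if b = a then Poly_Mapping.lookup q b * w b else 0)"
    unfolding lookup_sum by (rule sum.cong[OF refl]) (auto simp: lookup_single when_def)
  also have "\<dots> = Poly_Mapping.lookup q a * w a" using a by simp
  finally have "w a = 1" using a by (simp add: in_keys_iff)
  moreover have "w a = \<omega> ^ Poly_Mapping.lookup a (CX i) * inverse \<omega> ^ Poly_Mapping.lookup a (CY i)"
  proof -
    have "w a = (\<Prod>v\<in>Poly_Mapping.keys a. (if v = CX i then \<omega> ^ Poly_Mapping.lookup a v else 1) *
        (if v = CY i then inverse \<omega> ^ Poly_Mapping.lookup a v else 1))"
      unfolding w_def by (rule prod.cong[OF refl]) (auto simp: coef_def \<zeta>_def split: cvar.split)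
    also have "\<dots> = \<omega> ^ Poly_Mapping.lookup a (CX i) * inverse \<omega> ^ Poly_Mapping.lookup a (CY i)"
      by (simp add: prod.distrib prod.delta in_keys_iff)
    finally show ?thesis .
  qed
  moreover have "\<omega> \<noteq> 0" by (simp add: \<omega>_def)
  ultimately have "\<omega> ^ Poly_Mapping.lookup a (CX i) / \<omega> ^ Poly_Mapping.lookup a (CY i) = 1"
    by (simp add: power_inverse divide_inverse)
  then have "\<omega> ^ Poly_Mapping.lookup a (CX i) = \<omega> ^ Poly_Mapping.lookup a (CY i)"
    using right_inverse_eq[of "\<omega> ^ Poly_Mapping.lookup a (CY i)" "\<omega> ^ Poly_Mapping.lookup a (CX i)"] \<open>\<omega> \<noteq> 0\<close>
    by simp
  then show ?thesis using root_inj[OF r] unfolding \<omega>_def by blast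
qed

lemma part1b:
  assumes r: "r \<ge> 1" and q: "q \<in> CZ r n"
  shows "q \<in> phi r ` RnS n"
proof -
  have qC: "q \<in> Cn n" using q by (simp add: CZ_def)
  define p0 where "p0 = (\<Sum>a\<in>Poly_Mapping.keys q. Poly_Mapping.single (G r a) (Poly_Mapping.lookup q a))"
  have p0R: "p0 \<in> Rn n"
    unfolding p0_def Rn_VS
  proof (intro VS_sum VS_single)
    fix a w assume a: "a \<in> Poly_Mapping.keys q" and w: "w \<in> Poly_Mapping.keys (G r a)"
    from keys_G[OF w] obtain v where "v \<in> Poly_Mapping.keys a" "cidx v = ridx w" by blast
    moreover have "\<forall>v\<in>Poly_Mapping.keys a. cidx v < n" using qC a by (auto simp: Cn_VS VS_iff)
    ultimately show "ridx w < n" by force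
  qed
  have "phi r p0 = (\<Sum>a\<in>Poly_Mapping.keys q. Poly_Mapping.single a (Poly_Mapping.lookup q a))"
    unfolding p0_def phi_img subst_sum phi_single[unfolded phi_img]
    by (rule sum.cong[OF refl]) (simp add: F_G torus[OF r q])
  then have phi0: "phi r p0 = q" using expansion[of q] by simp
  have "phi r (avg n p0) = mconst (1 / of_nat (fact n)) * (\<Sum>\<sigma>\<in>Perms n. phi r (permR \<sigma> p0))"
    by (simp add: avg_def phi_img subst_mult subst_sum)
  also have "\<dots> = mconst (1 / of_nat (fact n)) * (\<Sum>\<sigma>\<in>Perms n. q)"
  proof -
    have "phi r (permR \<sigma> p0) = q" if "\<sigma> permutes {..<n}" for \<sigma>
    proof -
      have "phi r (permR \<sigma> p0) = gact (\<lambda>_. 1) \<sigma> (phi r p0)"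
        using gact_phi[OF r _ p0R, of "\<lambda>_. 1" \<sigma>] by simp
      also have "\<dots> = q" using q that by (simp add: phi0 CZ_def)
      finally show ?thesis .
    qed
    then show ?thesis by simp
  qed
  also have "\<dots> = q" by (rule avg_const)
  finally show ?thesis using avg_RnS[OF p0R] by (metis image_eqI)
qed

theorem proposition1:
  fixes r n :: nat
  assumes "r \<ge> 1" and "n \<ge> 1"
  shows "phi r ` RnS n = CZ r n
       \<and> {p \<in> RnS n. phi r p = 0} = In r n \<inter> RnS n
       \<and> (\<forall>p \<in> Rn n. (\<forall>\<sigma>. \<sigma> permutes {..<n} \<longrightarrow> permR \<sigma> p - p \<in> In r n)
            \<longrightarrow> (\<exists>q \<in> RnS n. p - q \<in> In r n))"
proof (intro conjI ballI impI)
  show "phi r ` RnS n = CZ r n"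
    using part1a[OF assms(1)] part1b[OF assms(1)] by blast
  show "{p \<in> RnS n. phi r p = 0} = In r n \<inter> RnS n"
    using kernel[OF assms(1)] phi_In by (auto simp: RnS_def)
  show "\<exists>q \<in> RnS n. p - q \<in> In r n"
    if "p \<in> Rn n" "\<forall>\<sigma>. \<sigma> permutes {..<n} \<longrightarrow> permR \<sigma> p - p \<in> In r n" for p
    using part3[OF that] .
qed

end
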